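(* Let $N\ge1$, $Y\ge0$ integers, $K=N+Y-1$, and let $M$ be an integer with $\alpha:=M-K-1>-1$. Let $w(t)=t^\alpha e^{-t}$ on $(0,\infty)$, $\langle p,q\rangle=\int_0^\infty p(t)q(t)w(t)\,dt$, and let $C_{N-1}(t)$ be the monic Laguerre polynomial of degree $N-1$, $C_{N-1}=(-1)^{N-1}(N-1)!\,L^{(\alpha)}_{N-1}$. Define $$D_{N-1}(t)=\Gamma(M)\sum_{j=N-1}^{K}\frac{(-K)_j}{\Gamma(M-K+j)}L^{(\alpha)}_j(t).$$ Then $D_{N-1}$ is a monic polynomial of the form $t^K+\sum_{l=0}^{N-2}a_l t^l$ (i.e. a linear combination of $1,t,\dots,t^{N-2},t^K$ with coefficient $1$ on $t^K$), satisfies $\langle t^l,D_{N-1}\rangle=0$ for $l=0,\dots,N-2$, and $$\langle C_{N-1},D_{N-1}\rangle=(-1)^{N-1}\Gamma(M)\,(-K)_{N-1}.$$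
   Context: $L^{(\alpha)}_j(t)=\sum_{l=0}^j\frac{(-1)^l\Gamma(j+\alpha+1)}{\Gamma(j-l+1)\Gamma(\alpha+l+1)}\frac{t^l}{l!}$ is the generalized Laguerre polynomial; $(a)_j=a(a+1)\cdots(a+j-1)$, $(a)_0=1$. *)

theory Defs
  imports "HOL-Analysis.Analysis"
begin

definition laguerre :: "real \<Rightarrow> nat \<Rightarrow> real \<Rightarrow> real" where
  "laguerre \<alpha> j t =
     (\<Sum>l=0..j. (-1)^l * Gamma (real j + \<alpha> + 1)
        / (Gamma (real j - real l + 1) * Gamma (\<alpha> + real l + 1)) * t^l / fact l)"

definition lag_inner :: "real \<Rightarrow> (real \<Rightarrow> real) \<Rightarrow> (real \<Rightarrow> real) \<Rightarrow> real" where
  "lag_inner \<alpha> p q = (LINT t:{0<..}|lborel. p t * q t * (t powr \<alpha> * exp (- t)))"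

definition C_poly :: "real \<Rightarrow> nat \<Rightarrow> real \<Rightarrow> real" where
  "C_poly \<alpha> N t = (-1)^(N-1) * fact (N-1) * laguerre \<alpha> (N-1) t"

definition D_poly :: "int \<Rightarrow> nat \<Rightarrow> nat \<Rightarrow> real \<Rightarrow> real \<Rightarrow> real" where
  "D_poly M K N \<alpha> t = Gamma (real_of_int M) *
     (\<Sum>j=N-1..K. pochhammer (- real K) j / Gamma (real_of_int M - real K + real j)
                   * laguerre \<alpha> j t)"

end

theory Submission
  imports Defs "HOL-Computational_Algebra.Polynomial" "HOL-Probability.Distributions"
begin


lemma mom: "has_bochner_integral lborel (\<lambda>t::real. indicator {0<..} t * (t^n * exp(-t))) (fact n :: real)"
proof (rule has_bochner_integral_nn_integral)
  show "(\<lambda>t::real. indicator {0<..} t * (t^n * exp(-t))) \<in> borel_measurable lborel"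
    apply (intro borel_measurable_times borel_measurable_indicator)
       apply simp_all
    apply measurable
    done
  show "AE x::real in lborel. 0 \<le> indicator {0<..} x * (x ^ n * exp (- x))"
    by (intro AE_I2) (auto simp: indicator_def)
  show "0 \<le> (fact n :: real)" by simp
  have "(\<integral>\<^sup>+ x. ennreal (indicator {0<..} (x::real) * (x ^ n * exp (- x))) \<partial>lborel)
     = (\<integral>\<^sup>+x. ennreal (x^n * exp (-x)) * indicator {0 ..} x \<partial>lborel)"
    apply (rule nn_integral_cong_AE)
    using AE_lborel_singleton[of 0] by eventually_elim (auto simp: indicator_def)
  also have "\<dots> = ennreal (fact n)" by (subst nn_intergal_power_times_exp_Ici) simp
  finally show "(\<integral>\<^sup>+ x. ennreal (indicator {0<..} (x::real) * (x ^ n * exp (- x))) \<partial>lborel) = ennreal (fact n)" .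
qed

definition mu :: "nat \<Rightarrow> real poly \<Rightarrow> real" where
  "mu a p = (\<Sum>i\<le>degree p. coeff p i * fact (i + a))"

lemma poly_int: "has_bochner_integral lborel (\<lambda>t. indicator {0<..} t * (poly R t * t^a * exp(-t))) (mu a R)"
proof -
  have "has_bochner_integral lborel (\<lambda>t. \<Sum>i\<le>degree R. coeff R i * (indicator {0<..} t * (t^(i+a) * exp(-t)))) (mu a R)"
    unfolding mu_def
    by (intro has_bochner_integral_sum has_bochner_integral_mult_right mom)
  moreover have "(\<lambda>t. \<Sum>i\<le>degree R. coeff R i * (indicator {0<..} t * (t^(i+a) * exp(-t))))
      = (\<lambda>t. indicator {0<..} t * (poly R t * t^a * exp(-t)))"
  proof
    fix t :: real
    show "(\<Sum>i\<le>degree R. coeff R i * (indicator {0<..} t * (t^(i+a) * exp(-t))))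
      = indicator {0<..} t * (poly R t * t^a * exp(-t))"
      by (cases "0 < t") (auto simp: poly_altdef sum_distrib_left sum_distrib_right power_add mult_ac)
  qed
  ultimately show ?thesis by simp
qed

lemma inner_mu:
  assumes "\<alpha> = real a"
  shows "lag_inner \<alpha> (poly P) (poly Q) = mu a (P * Q)"
proof -
  have "lag_inner \<alpha> (poly P) (poly Q) = integral\<^sup>L lborel (\<lambda>t. indicator {0<..} t * (poly (P*Q) t * t^a * exp(-t)))"
    unfolding lag_inner_def set_lebesgue_integral_def
    by (rule Bochner_Integration.integral_cong) (auto simp: indicator_def assms powr_realpow)
  also have "\<dots> = mu a (P*Q)" using poly_int by (rule has_bochner_integral_integral_eq)
  finally show ?thesis .
qed



lemma mu_any: "degree p \<le> n \<Longrightarrow> mu a p = (\<Sum>i\<le>n. coeff p i * fact (i + a))"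
  unfolding mu_def
  by (rule sum.mono_neutral_left) (auto simp: coeff_eq_0)

lemma mu_add: "mu a (p + q) = mu a p + mu a q"
proof -
  let ?n = "max (degree p) (degree q)"
  have "degree (p + q) \<le> ?n" by (rule degree_add_le) auto
  then show ?thesis
    by (simp add: mu_any[of _ ?n] mu_any[of p ?n] mu_any[of q ?n] sum.distrib algebra_simps)
qed

lemma mu_smult: "mu a (smult c p) = c * mu a p"
  by (simp add: mu_any[of "smult c p" "degree p"] mu_any[of p "degree p"] sum_distrib_left mult_ac)

lemma mu_zero: "mu a 0 = 0" by (simp add: mu_def)

lemma mu_sum: "mu a (\<Sum>j\<in>A. f j) = (\<Sum>j\<in>A. mu a (f j))"
  by (induction A rule: infinite_finite_induct) (auto simp: mu_zero mu_add)

lemma mu_monom: "mu a (monom c k) = c * fact (k + a)"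
proof -
  have "mu a (monom c k) = (\<Sum>i\<le>k. (if k = i then c else 0) * fact (i + a))"
    by (simp add: mu_any[of "monom c k" k] degree_monom_le coeff_monom)
  also have "\<dots> = (\<Sum>i\<le>k. if k = i then c * fact (i + a) else 0)"
    by (rule sum.cong) auto
  finally show ?thesis by simp
qed

lemma alt_diff:
  "(\<Sum>i\<le>Suc n. (-1)^i * real (Suc n choose i) * f i)
     = - (\<Sum>i\<le>n. (-1)^i * real (n choose i) * (f (Suc i) - f i))"
proof -
  have "(\<Sum>i\<le>Suc n. (-1)^i * real (Suc n choose i) * f i)
      = f 0 + (\<Sum>i\<le>n. (-1)^(Suc i) * real (Suc n choose Suc i) * f (Suc i))"
    by (subst sum.atMost_Suc_shift) simp
  also have "\<dots> = f 0 + (\<Sum>i\<le>n. (-1)^(Suc i) * real (n choose i) * f (Suc i))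
                 + (\<Sum>i\<le>n. (-1)^(Suc i) * real (n choose Suc i) * f (Suc i))"
    by (simp add: sum.distrib[symmetric] algebra_simps)
  also have "(\<Sum>i\<le>n. (-1)^(Suc i) * real (n choose Suc i) * f (Suc i))
      = (\<Sum>i\<le>Suc n. (-1)^i * real (n choose i) * f i) - f 0"
    by (simp only: sum.atMost_Suc_shift) simp
  also have "(\<Sum>i\<le>Suc n. (-1)^i * real (n choose i) * f i) = (\<Sum>i\<le>n. (-1)^i * real (n choose i) * f i)"
    by simp
  finally show ?thesis by (simp add: sum_subtractf algebra_simps sum_negf)
qed

lemma poch_diff: "pochhammer (x+1) (Suc m) - pochhammer x (Suc m) = of_nat (Suc m) * pochhammer (x+1::real) m"
proof -
  have "pochhammer x (Suc m) = x * pochhammer (x+1) m" by (rule pochhammer_rec)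
  moreover have "pochhammer (x+1) (Suc m) = pochhammer (x+1) m * (x + 1 + of_nat m)" by (rule pochhammer_Suc)
  ultimately show ?thesis by (simp add: algebra_simps)
qed

definition S :: "nat \<Rightarrow> nat \<Rightarrow> real \<Rightarrow> real" where
  "S n l b = (\<Sum>i\<le>n. (-1)^i * real (n choose i) * pochhammer (b + real i) l)"

lemma S_step: "S (Suc n) (Suc l) b = - real (Suc l) * S n l (b+1)"
proof -
  have "S (Suc n) (Suc l) b = - (\<Sum>i\<le>n. (-1)^i * real (n choose i) *
      (pochhammer (b + real (Suc i)) (Suc l) - pochhammer (b + real i) (Suc l)))"
    unfolding S_def by (rule alt_diff)
  also have "\<dots> = - (\<Sum>i\<le>n. (-1)^i * real (n choose i) * (real (Suc l) * pochhammer (b + 1 + real i) l))"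
    using poch_diff[of "b + real _" l] by (simp add: algebra_simps)
  also have "\<dots> = - (real (Suc l) * (\<Sum>i\<le>n. (-1)^i * real (n choose i) * pochhammer (b + 1 + real i) l))"
    by (subst sum_distrib_left) (rule arg_cong[of _ _ uminus], rule sum.cong, simp_all only: mult_ac)
  also have "\<dots> = - real (Suc l) * S n l (b+1)" unfolding S_def by (simp add: add_ac ring_distribs)
  finally show ?thesis .
qed

lemma S_zero: "S (Suc n) 0 b = 0"
  unfolding S_def using alt_diff[of n "\<lambda>_. 1"] by simp

lemma S_gt: "l < n \<Longrightarrow> S n l b = 0"
proof (induction n arbitrary: l b)
  case 0 then show ?case by simp
next
  case (Suc n)
  then show ?case
    by (cases l) (auto simp: S_zero S_step)
qed

lemma S_eq: "S n n b = (-1)^n * fact n"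
  by (induction n arbitrary: b) (auto simp: S_def[of 0] S_step algebra_simps)



definition lc :: "real \<Rightarrow> nat \<Rightarrow> nat \<Rightarrow> real" where
  "lc \<alpha> j l = (-1)^l * Gamma (real j + \<alpha> + 1)
        / (Gamma (real j - real l + 1) * Gamma (\<alpha> + real l + 1)) / fact l"

definition Lp :: "real \<Rightarrow> nat \<Rightarrow> real poly" where
  "Lp \<alpha> j = (\<Sum>l=0..j. monom (lc \<alpha> j l) l)"

lemma poly_Lp: "poly (Lp \<alpha> j) t = laguerre \<alpha> j t"
  unfolding Lp_def laguerre_def lc_def
  by (simp add: poly_sum poly_monom)

lemma degree_Lp: "degree (Lp \<alpha> j) \<le> j"
  unfolding Lp_def
  by (rule degree_sum_le) (auto intro: order.trans[OF degree_monom_le])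

lemma coeff_Lp: "coeff (Lp \<alpha> j) l = (if l \<le> j then lc \<alpha> j l else 0)"
proof -
  have "coeff (Lp \<alpha> j) l = (\<Sum>i=0..j. if l = i then lc \<alpha> j i else 0)"
    unfolding Lp_def by (simp add: coeff_sum coeff_monom)
  then show ?thesis by simp
qed

lemma Gamma_nat: "Gamma (real n + 1) = fact n"
  using Gamma_fact[of n] by (simp add: add.commute)

lemma lc_nat: "l \<le> j \<Longrightarrow> lc (real a) j l = (-1)^l * fact (j+a) / (fact (j-l) * fact (a+l) * fact l)"
proof -
  assume "l \<le> j"
  have 1: "Gamma (real j + real a + 1) = fact (j+a)" using Gamma_nat[of "j+a"] by simp
  have 2: "Gamma (real j - real l + 1) = fact (j-l)" using Gamma_nat[of "j-l"] \<open>l \<le> j\<close> by (simp add: of_nat_diff)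
  have 3: "Gamma (real a + real l + 1) = fact (a+l)" using Gamma_nat[of "a+l"] by simp
  show ?thesis unfolding lc_def 1 2 3 by simp
qed

lemma fact_poch: "fact (m + l) = fact m * pochhammer (real m + 1) l"
  by (induction l) (auto simp: pochhammer_Suc algebra_simps)

lemma mu_monom_Lp: "mu a (monom 1 l * Lp (real a) j) = fact (j+a) / fact j * S j l (real a + 1)"
proof -
  have "monom 1 l * Lp (real a) j = (\<Sum>i=0..j. monom (lc (real a) j i) (l+i))"
    unfolding Lp_def by (simp add: sum_distrib_left mult_monom)
  then have "mu a (monom 1 l * Lp (real a) j) = (\<Sum>i=0..j. lc (real a) j i * fact (l + i + a))"
    by (simp add: mu_sum mu_monom)
  also have "\<dots> = (\<Sum>i=0..j. fact (j+a) / fact j * ((-1)^i * real (j choose i) * pochhammer (real a + 1 + real i) l))"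
  proof (rule sum.cong)
    fix i assume "i \<in> {0..j}"
    then have ij: "i \<le> j" by simp
    have f: "fact (l + i + a) = fact (a+i) * pochhammer (real a + 1 + real i) l"
      using fact_poch[of "a+i" l] by (simp add: add_ac)
    have b: "real (j choose i) = fact j / (fact i * fact (j-i))"
      using binomial_fact[OF ij] by simp
    show "lc (real a) j i * fact (l + i + a) = fact (j+a) / fact j * ((-1)^i * real (j choose i) * pochhammer (real a + 1 + real i) l)"
      unfolding lc_nat[OF ij] f b by (simp add: field_simps add_ac)
  qed simp
  also have "\<dots> = fact (j+a) / fact j * S j l (real a + 1)"
    unfolding S_def by (simp add: sum_distrib_left atLeast0AtMost)
  finally show ?thesis .
qed

lemma orth_monom: "l < j \<Longrightarrow> mu a (monom 1 l * Lp (real a) j) = 0"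
  by (simp add: mu_monom_Lp S_gt)

lemma top_monom: "mu a (monom 1 j * Lp (real a) j) = (-1)^j * fact (j+a)"
  by (simp add: mu_monom_Lp S_eq)

lemma P_expand: "(P::real poly) * Q = (\<Sum>l\<le>n. smult (coeff P l) (monom 1 l * Q))" if "degree P \<le> n"
proof -
  have "P * Q = (\<Sum>l\<le>n. monom (coeff P l) l) * Q"
    using poly_as_sum_of_monoms'[OF that] by simp
  also have "\<dots> = (\<Sum>l\<le>n. monom (coeff P l) l * Q)" by (simp add: sum_distrib_right)
  also have "\<dots> = (\<Sum>l\<le>n. smult (coeff P l) (monom 1 l * Q))"
  proof (rule sum.cong)
    fix l
    have "monom (coeff P l) l = smult (coeff P l) (monom 1 l)" by (simp add: smult_monom)
    then show "monom (coeff P l) l * Q = smult (coeff P l) (monom 1 l * Q)" by simp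
  qed simp
  finally show ?thesis .
qed

lemma orth_poly: "degree P < j \<Longrightarrow> mu a (P * Lp (real a) j) = 0"
  by (subst P_expand[of P "degree P"]) (auto simp: mu_sum mu_smult orth_monom)

lemma top_poly: assumes "degree P \<le> j"
  shows "mu a (P * Lp (real a) j) = coeff P j * ((-1)^j * fact (j+a))"
proof -
  have "mu a (P * Lp (real a) j) = (\<Sum>l\<le>j. coeff P l * mu a (monom 1 l * Lp (real a) j))"
    by (subst P_expand[OF assms]) (simp add: mu_sum mu_smult)
  also have "\<dots> = (\<Sum>l\<le>j. if l = j then coeff P j * ((-1)^j * fact (j+a)) else 0)"
    by (rule sum.cong) (auto simp: orth_monom top_monom)
  finally show ?thesis by simp
qed



lemma poch_negK: "j \<le> K \<Longrightarrow> pochhammer (- real K) j = (-1)^j * fact K / fact (K-j)"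
proof -
  assume jK: "j \<le> K"
  have "pochhammer (- real K) j = (-1)^j * pochhammer (real K - real j + 1) j"
    by (rule pochhammer_minus)
  also have "real K - real j + 1 = real (K-j) + 1" using jK by (simp add: of_nat_diff)
  also have "pochhammer (real (K-j) + 1) j = fact K / fact (K-j)"
    using fact_poch[of "K-j" j] jK by (simp add: field_simps)
  finally show ?thesis by simp
qed

lemma alt_sum: assumes "i \<le> K"
  shows "(\<Sum>j=i..K. (-1)^j / (fact (K-j) * fact (j-i))) = (-1)^i * (if i = K then 1 else 0 :: real)"
proof -
  define n where "n = K - i"
  have K: "K = n + i" using assms n_def by simp
  have "(\<Sum>j=i..K. (-1)^j / (fact (K-j) * fact (j-i) :: real))
      = (\<Sum>m=0..n. (-1)^(m+i) / (fact (K-(m+i)) * fact (m+i-i)))"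
    using sum.shift_bounds_cl_nat_ivl[of "\<lambda>j. (-1)^j / (fact (K-j) * fact (j-i) :: real)" 0 i n]
    by (simp add: K)
  also have "\<dots> = (\<Sum>m\<le>n. (-1)^i / fact n * ((-1)^m * real (n choose m)))"
  proof (rule sum.cong)
    fix m assume "m \<in> {..n}"
    then have mn: "m \<le> n" by simp
    have "K - (m+i) = n - m" using K by simp
    then show "(-1)^(m+i) / (fact (K-(m+i)) * fact (m+i-i)) = (-1)^i / fact n * ((-1)^m * real (n choose m) :: real)"
      using binomial_fact[OF mn, where 'a=real] by (simp add: power_add field_simps)
  qed (simp add: atLeast0AtMost)
  also have "\<dots> = (-1)^i / fact n * (\<Sum>m\<le>n. (-1)^m * real (n choose m))"
    by (simp add: sum_distrib_left)
  also have "\<dots> = (-1)^i * (if i = K then 1 else 0)"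
    using choose_alternating_sum[of n, where 'a=real] by (cases "n = 0") (auto simp: K)
  finally show ?thesis .
qed

lemma key_sum: assumes "i \<le> K"
  shows "(\<Sum>j=i..K. fact (K+a) * (pochhammer (- real K) j / fact (a+j)) * lc (real a) j i) = (if i = K then 1 else (0::real))"
proof -
  define X :: real where "X = (-1)^i * fact (K+a) * fact K / (fact (a+i) * fact i)"
  have "(\<Sum>j=i..K. fact (K+a) * (pochhammer (- real K) j / fact (a+j)) * lc (real a) j i)
      = (\<Sum>j=i..K. X * ((-1)^j / (fact (K-j) * fact (j-i))))"
  proof (rule sum.cong)
    fix j assume "j \<in> {i..K}"
    then have ij: "i \<le> j" and jK: "j \<le> K" by auto
    show "fact (K+a) * (pochhammer (- real K) j / fact (a+j)) * lc (real a) j i = X * ((-1)^j / (fact (K-j) * fact (j-i)))"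
      unfolding poch_negK[OF jK] lc_nat[OF ij] X_def by (simp add: field_simps add_ac)
  qed simp
  also have "\<dots> = X * ((-1)^i * (if i = K then 1 else 0))"
    by (subst sum_distrib_left[symmetric]) (simp only: alt_sum[OF assms])
  also have "\<dots> = (if i = K then 1 else 0)"
    by (auto simp: X_def add_ac)
  finally show ?thesis .
qed



theorem mainTheorem6:
  fixes N Y K :: nat and M :: int and \<alpha> :: real
  assumes "N \<ge> 1"
    and "K = N + Y - 1"
    and "\<alpha> = real_of_int M - real K - 1"
    and "\<alpha> > -1"
  shows "(\<exists>a :: nat \<Rightarrow> real. \<forall>t. D_poly M K N \<alpha> t = t ^ K + (\<Sum>l<N-1. a l * t ^ l))
    \<and> (\<forall>l < N - 1. lag_inner \<alpha> (\<lambda>t. t ^ l) (D_poly M K N \<alpha>) = 0)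
    \<and> lag_inner \<alpha> (C_poly \<alpha> N) (D_poly M K N \<alpha>)
        = (-1) ^ (N - 1) * Gamma (real_of_int M) * pochhammer (- real K) (N - 1)"
proof -
  define a where "a = nat (M - int K - 1)"
  have "M - int K - 1 > -1" using assms(3,4) by linarith
  then have Ma: "real_of_int M = real (K + a) + 1" unfolding a_def by simp
  have al: "\<alpha> = real a" using assms(3) Ma by simp
  have NK: "N - 1 \<le> K" using assms(2) by simp
  have GM: "Gamma (real_of_int M) = fact (K + a)" using Ma Gamma_nat[of "K+a"] by simp
  have Gd: "Gamma (real_of_int M - real K + real j) = fact (a + j)" for j
    using Ma Gamma_nat[of "a+j"] by (simp add: algebra_simps)
  define d where "d j = pochhammer (- real K) j / Gamma (real_of_int M - real K + real j)" for j
  define Dp where "Dp = smult (Gamma (real_of_int M)) (\<Sum>j=N-1..K. smult (d j) (Lp \<alpha> j))"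
  have hD: "D_poly M K N \<alpha> = poly Dp"
    by (rule ext) (simp add: D_poly_def Dp_def d_def poly_sum poly_Lp)
  define Cp where "Cp = smult ((-1)^(N-1) * fact (N-1)) (Lp \<alpha> (N-1))"
  have hC: "C_poly \<alpha> N = poly Cp"
    by (rule ext) (simp add: C_poly_def Cp_def poly_Lp)
  have degD: "degree Dp \<le> K"
    unfolding Dp_def
    by (rule order.trans[OF degree_smult_le], rule degree_sum_le)
       (auto intro: order.trans[OF degree_smult_le] order.trans[OF degree_Lp])
  have coeffD: "coeff Dp i = (if i = K then 1 else 0)" if "N - 1 \<le> i" "i \<le> K" for i
  proof -
    have "coeff Dp i = Gamma (real_of_int M) * (\<Sum>j=N-1..K. if i \<le> j then d j * lc \<alpha> j i else 0)"
      by (simp add: Dp_def coeff_sum coeff_Lp if_distrib cong: if_cong)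
    also have "(\<Sum>j=N-1..K. if i \<le> j then d j * lc \<alpha> j i else 0) = (\<Sum>j\<in>{j\<in>{N-1..K}. i \<le> j}. d j * lc \<alpha> j i)"
      by (rule sum.inter_filter[symmetric]) simp
    also have "{j\<in>{N-1..K}. i \<le> j} = {i..K}" using that by auto
    also have "Gamma (real_of_int M) * (\<Sum>j=i..K. d j * lc \<alpha> j i)
        = (\<Sum>j=i..K. fact (K+a) * (pochhammer (- real K) j / fact (a+j)) * lc (real a) j i)"
      by (simp add: GM sum_distrib_left d_def Gd al mult_ac)
    also have "\<dots> = (if i = K then 1 else 0)" by (rule key_sum[OF that(2)])
    finally show ?thesis .
  qed
  have part1: "\<forall>t. D_poly M K N \<alpha> t = t ^ K + (\<Sum>l<N-1. coeff Dp l * t ^ l)"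
  proof
    fix t
    have "D_poly M K N \<alpha> t = (\<Sum>i\<le>K. coeff Dp i * t ^ i)"
      unfolding hD using poly_as_sum_of_monoms'[OF degD]
      by (metis (no_types, lifting) poly_monom poly_sum sum.cong)
    also have "{..K} = {..<N-1} \<union> {N-1..K}" using NK by auto
    also have "(\<Sum>i\<in>{..<N-1} \<union> {N-1..K}. coeff Dp i * t ^ i)
        = (\<Sum>i<N-1. coeff Dp i * t ^ i) + (\<Sum>i=N-1..K. coeff Dp i * t ^ i)"
      by (rule sum.union_disjoint) auto
    also have "(\<Sum>i=N-1..K. coeff Dp i * t ^ i) = (\<Sum>i=N-1..K. if i = K then t ^ i else 0)"
      by (rule sum.cong) (auto simp: coeffD)
    also have "\<dots> = t ^ K" using NK by simp
    finally show "D_poly M K N \<alpha> t = t ^ K + (\<Sum>l<N-1. coeff Dp l * t ^ l)" by simp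
  qed
  have prodD: "mu a (P * Dp) = Gamma (real_of_int M) * (\<Sum>j=N-1..K. d j * mu a (P * Lp \<alpha> j))" for P
    by (simp add: Dp_def mult_smult_right sum_distrib_left mu_smult mu_sum)
  have part2: "\<forall>l < N - 1. lag_inner \<alpha> (\<lambda>t. t ^ l) (D_poly M K N \<alpha>) = 0"
  proof (intro allI impI)
    fix l assume l: "l < N - 1"
    have "(\<lambda>t::real. t ^ l) = poly (monom 1 l)" by (rule ext) (simp add: poly_monom)
    then have "lag_inner \<alpha> (\<lambda>t. t ^ l) (D_poly M K N \<alpha>) = mu a (monom 1 l * Dp)"
      by (simp add: hD inner_mu[OF al])
    also have "\<dots> = 0" unfolding prodD al
      by (rule mult_eq_0_iff[THEN iffD2], rule disjI2, rule sum.neutral)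
         (use l in \<open>auto intro!: orth_monom\<close>)
    finally show "lag_inner \<alpha> (\<lambda>t. t ^ l) (D_poly M K N \<alpha>) = 0" .
  qed
  have degC: "degree Cp \<le> N - 1" unfolding Cp_def
    by (rule order.trans[OF degree_smult_le degree_Lp])
  have cC: "coeff Cp (N-1) = 1"
    by (simp add: Cp_def coeff_Lp al lc_nat add_ac)
  have "lag_inner \<alpha> (C_poly \<alpha> N) (D_poly M K N \<alpha>) = mu a (Cp * Dp)"
    by (simp add: hC hD inner_mu[OF al])
  also have "\<dots> = Gamma (real_of_int M) * (\<Sum>j=N-1..K. d j * mu a (Cp * Lp \<alpha> j))" by (rule prodD)
  also have "(\<Sum>j=N-1..K. d j * mu a (Cp * Lp \<alpha> j)) = (\<Sum>j=N-1..K. if j = N-1 then d j * ((-1)^(N-1) * fact (N-1+a)) else 0)"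
  proof (rule sum.cong)
    fix j assume "j \<in> {N-1..K}"
    then have j: "N - 1 \<le> j" by simp
    show "d j * mu a (Cp * Lp \<alpha> j) = (if j = N-1 then d j * ((-1)^(N-1) * fact (N-1+a)) else 0)"
    proof (cases "j = N - 1")
      case True
      then show ?thesis using top_poly[OF degC, of a] cC by (simp add: al)
    next
      case False
      then have "degree Cp < j" using degC j by simp
      then show ?thesis using False by (simp add: al orth_poly)
    qed
  qed simp
  also have "\<dots> = d (N-1) * ((-1)^(N-1) * fact (N-1+a))" using NK by simp
  finally have part3: "lag_inner \<alpha> (C_poly \<alpha> N) (D_poly M K N \<alpha>)
        = (-1) ^ (N - 1) * Gamma (real_of_int M) * pochhammer (- real K) (N - 1)"
    by (simp add: d_def Gd add_ac)
  show ?thesis using part1 part2 part3 by blast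
qed

end
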